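(* Let $X$ be a topological space and $n\ge1$ an integer. There exists at most one partition $X=\Gamma_1\sqcup\Gamma_2$ with the following properties: (i) $\Gamma_1$ is open in $X$ and there is a homeomorphism $\psi_1\colon\mathbb R^\times\to\Gamma_1$; (ii) there is a homeomorphism $\psi_2\colon\mathbb R^{2n}\to\Gamma_2$; (iii) for every subset $A\subseteq\mathbb R^\times$ the following are equivalent: $0$ is an accumulation point of $A$; $\Gamma_2\cap\overline{\psi_1(A)}\ne\emptyset$; $\Gamma_2\subseteq\overline{\psi_1(A)}$. Moreover, for such a partition, $\Gamma_2$ is the unique maximal element of the partially ordered set $\mathrm{Cl}_H(X)$.
   Context: $\mathbb R^\times=\mathbb R\setminus\{0\}$. $\mathrm{Cl}_H(X)$ denotes the set of all closed subsets of $X$ that are connected and Hausdorff in the relative topology, partially ordered by inclusion. Subspaces $\Gamma_1,\Gamma_2$ carry the relative topology. *)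

theory Defs
  imports "HOL-Analysis.Analysis"
begin

definition ClH :: "'a topology \<Rightarrow> 'a set set" where
  "ClH X = {C. closedin X C \<and> connectedin X C \<and> Hausdorff_space (subtopology X C)}"

definition special_partition :: "'a topology \<Rightarrow> nat \<Rightarrow> 'a set \<Rightarrow> 'a set \<Rightarrow> bool" where
  "special_partition X n G1 G2 \<longleftrightarrow>
     G1 \<union> G2 = topspace X \<and> G1 \<inter> G2 = {} \<and>
     openin X G1 \<and>
     (\<exists>\<psi>2. homeomorphic_map (Euclidean_space (2 * n)) (subtopology X G2) \<psi>2) \<and>
     (\<exists>\<psi>1. homeomorphic_map (top_of_set (- {0::real})) (subtopology X G1) \<psi>1 \<and>
        (\<forall>A. A \<subseteq> - {0} \<longrightarrow>
           ((0 islimpt A) \<longleftrightarrow> G2 \<inter> X closure_of (\<psi>1 ` A) \<noteq> {}) \<and>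
           (G2 \<inter> X closure_of (\<psi>1 ` A) \<noteq> {} \<longleftrightarrow> G2 \<subseteq> X closure_of (\<psi>1 ` A))))"

definition maximal_in :: "'a set set \<Rightarrow> 'a set \<Rightarrow> bool" where
  "maximal_in S C \<longleftrightarrow> C \<in> S \<and> (\<forall>D\<in>S. C \<subseteq> D \<longrightarrow> D = C)"

end

theory Submission
  imports Defs
begin

locale sp =
  fixes X :: "'a topology" and n :: nat and G1 G2 :: "'a set"
    and p1 :: "real \<Rightarrow> 'a" and p2 :: "(nat \<Rightarrow> real) \<Rightarrow> 'a"
  assumes n1: "n \<ge> 1" and un: "G1 \<union> G2 = topspace X" and dj: "G1 \<inter> G2 = {}"
    and op: "openin X G1"
    and h2: "homeomorphic_map (Euclidean_space (2*n)) (subtopology X G2) p2"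
    and h1: "homeomorphic_map (top_of_set (-{0::real})) (subtopology X G1) p1"
    and iii1: "\<And>A. A \<subseteq> -{0} \<Longrightarrow> (0 islimpt A) \<longleftrightarrow> G2 \<inter> X closure_of (p1 ` A) \<noteq> {}"
    and iii2: "\<And>A. A \<subseteq> -{0} \<Longrightarrow> G2 \<inter> X closure_of (p1 ` A) \<noteq> {} \<longleftrightarrow> G2 \<subseteq> X closure_of (p1 ` A)"
begin

lemma img1: "p1 ` (-{0}) = G1"
  using homeomorphic_imp_surjective_map[OF h1] un by auto

lemma inj1: "inj_on p1 (-{0})"
  using homeomorphic_imp_injective_map[OF h1] by simp

lemma img2: "p2 ` topspace (Euclidean_space (2*n)) = G2"
  using homeomorphic_imp_surjective_map[OF h2] un by auto

lemma two: "\<exists>x y. x \<in> G2 \<and> y \<in> G2 \<and> x \<noteq> y"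
proof -
  let ?a = "(\<lambda>i::nat. 0::real)" and ?b = "(\<lambda>i::nat. if i = 0 then 1 else 0::real)"
  have a: "?a \<in> topspace (Euclidean_space (2*n))" by (simp add: topspace_Euclidean_space)
  have b: "?b \<in> topspace (Euclidean_space (2*n))" using n1 by (simp add: topspace_Euclidean_space)
  have ne: "?a \<noteq> ?b" by (metis zero_neq_one)
  have "p2 ?a \<noteq> p2 ?b"
    using homeomorphic_imp_injective_map[OF h2] a b ne by (meson inj_onD)
  then show ?thesis using img2 a b by blast
qed

lemma G2ne: "G2 \<noteq> {}" using two by blast

lemma G2closed: "closedin X G2"
proof -
  have "G2 = topspace X - G1" using un dj by blast
  then show ?thesis using op by auto
qed

lemma nonhaus:
  assumes A: "A \<subseteq> -{0}" and l: "0 islimpt A" and D: "closedin X D" and sub: "p1 ` A \<subseteq> D"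
  shows "\<not> Hausdorff_space (subtopology X D)"
proof
  assume H: "Hausdorff_space (subtopology X D)"
  have "G2 \<subseteq> X closure_of (p1 ` A)" using iii1[OF A] iii2[OF A] l by blast
  also have "\<dots> \<subseteq> D" using D sub by (simp add: closure_of_minimal)
  finally have G2D: "G2 \<subseteq> D" .
  obtain x y where xy: "x \<in> G2" "y \<in> G2" "x \<noteq> y" using two by blast
  have "x \<in> topspace (subtopology X D)" "y \<in> topspace (subtopology X D)"
    using xy G2D un by auto
  then have "\<exists>U V. openin (subtopology X D) U \<and> openin (subtopology X D) V \<and>
    x \<in> U \<and> y \<in> V \<and> disjnt U V"
    using H xy(3) unfolding Hausdorff_space_def by simp
  then obtain U V where UV: "openin (subtopology X D) U" "openin (subtopology X D) V"
    "x \<in> U" "y \<in> V" "disjnt U V" by blast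
  obtain U' where U': "openin X U'" "U = U' \<inter> D" using UV(1) unfolding openin_subtopology by blast
  obtain V' where V': "openin X V'" "V = V' \<inter> D" using UV(2) unfolding openin_subtopology by blast
  have key: "\<not> 0 islimpt {a\<in>A. p1 a \<notin> W}" if W: "openin X W" "z \<in> W" "z \<in> G2" for W z
  proof
    assume L: "0 islimpt {a\<in>A. p1 a \<notin> W}"
    have S: "{a\<in>A. p1 a \<notin> W} \<subseteq> -{0}" using A by auto
    have "G2 \<subseteq> X closure_of (p1 ` {a\<in>A. p1 a \<notin> W})"
      using iii1[OF S] iii2[OF S] L by simp
    then have "z \<in> X closure_of (p1 ` {a\<in>A. p1 a \<notin> W})" using W(3) by (rule subsetD)
    then have "\<exists>y\<in>p1 ` {a\<in>A. p1 a \<notin> W}. y \<in> W" using W(1,2) unfolding in_closure_of by blast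
    then show False by auto
  qed
  have k1: "\<not> 0 islimpt {a\<in>A. p1 a \<notin> U'}"
    by (rule key[OF U'(1), of x]) (use UV(3) U'(2) xy in auto)
  have k2: "\<not> 0 islimpt {a\<in>A. p1 a \<notin> V'}"
    by (rule key[OF V'(1), of y]) (use UV(4) V'(2) xy in auto)
  have "A \<subseteq> {a\<in>A. p1 a \<notin> U'} \<union> {a\<in>A. p1 a \<notin> V'}"
  proof
    fix a assume a: "a \<in> A"
    have "p1 a \<in> D" using a sub by auto
    then have "\<not> (p1 a \<in> U' \<and> p1 a \<in> V')" using UV(5) U'(2) V'(2) unfolding disjnt_def by auto
    then show "a \<in> {a\<in>A. p1 a \<notin> U'} \<union> {a\<in>A. p1 a \<notin> V'}" using a by auto
  qed
  then have "0 islimpt ({a\<in>A. p1 a \<notin> U'} \<union> {a\<in>A. p1 a \<notin> V'})"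
    using l by (rule islimpt_subset[rotated])
  then show False using k1 k2 by (simp add: islimpt_Un)
qed

lemma notboth:
  assumes D: "D \<in> ClH X"
  shows "D \<inter> G1 = {} \<or> D \<inter> G2 = {}"
proof (rule ccontr)
  assume c: "\<not> (D \<inter> G1 = {} \<or> D \<inter> G2 = {})"
  have cl: "closedin X D" and co: "connectedin X D" and ha: "Hausdorff_space (subtopology X D)"
    using D by (auto simp: ClH_def)
  have Dsub: "D \<subseteq> topspace X" using cl closedin_subset by blast
  have meet: "G2 \<inter> X closure_of (D \<inter> G1) \<noteq> {}"
  proof
    assume e: "G2 \<inter> X closure_of (D \<inter> G1) = {}"
    have "X closure_of (D \<inter> G1) \<subseteq> D"
      using cl by (simp add: closure_of_minimal)
    moreover have "X closure_of (D \<inter> G1) \<subseteq> topspace X" by (rule closure_of_subset_topspace)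
    ultimately have "X closure_of (D \<inter> G1) \<subseteq> D \<inter> G1" using e un by blast
    then have eq: "X closure_of (D \<inter> G1) = D \<inter> G1"
      using closure_of_subset Dsub by (metis inf.coboundedI1 subset_antisym)
    have "closedin X (D \<inter> G1)" by (metis eq closedin_closure_of)
    then have "closedin (subtopology X D) (D \<inter> G1)"
      by (simp add: closedin_subset_topspace)
    moreover have "openin (subtopology X D) (D \<inter> G1)"
      unfolding openin_subtopology using op by blast
    ultimately have "D \<inter> G1 = {} \<or> D \<inter> G1 = topspace (subtopology X D)"
      using co unfolding connectedin_def connected_space_clopen_in by blast
    then show False using c Dsub dj by auto
  qed
  define A where "A = {a\<in>-{0}. p1 a \<in> D}"
  have AD: "p1 ` A = D \<inter> G1" using img1 unfolding A_def by auto
  have A0: "A \<subseteq> -{0}" unfolding A_def by auto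
  have "0 islimpt A" using iii1[OF A0] meet AD by simp
  then show False using nonhaus[OF A0 _ cl] AD ha by blast
qed

lemma G2ClH: "G2 \<in> ClH X"
proof -
  have hs: "Euclidean_space (2*n) homeomorphic_space subtopology X G2"
    using h2 homeomorphic_map_imp_homeomorphic_space by blast
  have "connected_space (subtopology X G2)"
    using homeomorphic_connected_space[OF hs] connected_Euclidean_space by blast
  moreover have "Hausdorff_space (subtopology X G2)"
    using homeomorphic_Hausdorff_space[OF hs] Hausdorff_Euclidean_space by blast
  ultimately show ?thesis using G2closed un
    by (auto simp: ClH_def connectedin_def)
qed

lemma G2max: "maximal_in (ClH X) G2"
  unfolding maximal_in_def
proof (intro conjI ballI impI)
  fix D assume D: "D \<in> ClH X" and s: "G2 \<subseteq> D"
  have "D \<inter> G1 = {}" using notboth[OF D] s G2ne by blast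
  moreover have "D \<subseteq> topspace X" using D by (auto simp: ClH_def closedin_subset)
  ultimately show "D = G2" using s un by blast
qed (rule G2ClH)

lemma ext:
  assumes I: "I \<subseteq> -{0}" "closed I" "connected I"
  shows "p1 ` I \<in> ClH X"
proof -
  have c1: "continuous_map (top_of_set (-{0::real})) (subtopology X G1) p1"
    using h1 homeomorphic_imp_continuous_map by blast
  have "connectedin (top_of_set (-{0::real})) I"
    using I by (simp add: connectedin_subtopology)
  then have "connectedin (subtopology X G1) (p1 ` I)"
    using connectedin_continuous_map_image[OF c1] by blast
  then have conn: "connectedin X (p1 ` I)" by (simp add: connectedin_subtopology)
  have sub: "p1 ` I \<subseteq> G1" using I img1 by blast
  have hs: "top_of_set (-{0::real}) homeomorphic_space subtopology X G1"
    using h1 homeomorphic_map_imp_homeomorphic_space by blast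
  have "Hausdorff_space (subtopology X G1)"
    using homeomorphic_Hausdorff_space[OF hs] Hausdorff_space_subtopology Hausdorff_space_euclidean by blast
  then have "Hausdorff_space (subtopology (subtopology X G1) (p1 ` I))"
    using Hausdorff_space_subtopology by blast
  then have haus: "Hausdorff_space (subtopology X (p1 ` I))"
    using sub by (simp add: subtopology_subtopology inf_absorb2)
  have closed: "closedin X (p1 ` I)"
  proof -
    have "X closure_of (p1 ` I) \<subseteq> p1 ` I"
    proof
      fix z assume z: "z \<in> X closure_of (p1 ` I)"
      have "z \<in> topspace X" by (meson z closure_of_subset_topspace subsetD)
      moreover have "z \<notin> G2"
      proof
        assume "z \<in> G2"
        then have "G2 \<inter> X closure_of (p1 ` I) \<noteq> {}" using z by blast
        then have "0 islimpt I" using iii1[OF I(1)] by simp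
        then have "0 \<in> I" using I(2) closed_limpt by blast
        then show False using I(1) by blast
      qed
      ultimately have "z \<in> G1" using un by blast
      then obtain t where t: "t \<in> -{0}" "z = p1 t" using img1 by blast
      show "z \<in> p1 ` I"
      proof (rule ccontr)
        assume nz: "z \<notin> p1 ` I"
        then have tI: "t \<notin> I" using t by blast
        let ?W = "p1 ` (-{0} - I)"
        have "openin (top_of_set (-{0::real})) (-{0} - I)"
          unfolding openin_open using I(2) by (intro exI[of _ "-I"]) (auto simp: closed_open)
        then have "openin (subtopology X G1) ?W"
          using homeomorphic_imp_open_map[OF h1, unfolded open_map_def] by blast
        then have W: "openin X ?W" using op openin_trans_full by blast
        have zW: "z \<in> ?W" using t tI by blast
        have "?W \<inter> p1 ` I = {}"
        proof (rule equals0I)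
          fix u assume "u \<in> ?W \<inter> p1 ` I"
          then obtain a b where ab: "a \<in> -{0}" "a \<notin> I" "u = p1 a" "b \<in> I" "u = p1 b" by blast
          have "b \<in> -{0}" using ab(4) I(1) by blast
          then have "a = b" using inj_onD[OF inj1] ab by metis
          then show False using ab by blast
        qed
        moreover have "\<exists>y\<in>p1 ` I. y \<in> ?W"
        proof -
          have cz: "\<forall>T. z \<in> T \<and> openin X T \<longrightarrow> (\<exists>y. y \<in> p1 ` I \<and> y \<in> T)"
            using z[unfolded in_closure_of] by (rule conjunct2)
          show ?thesis using cz[rule_format, OF conjI[OF zW W]] by (simp only: Bex_def)
        qed
        ultimately show False by blast
      qed
    qed
    moreover have "p1 ` I \<subseteq> topspace X" using sub un by blast
    ultimately have "p1 ` I \<subseteq> topspace X \<and> X closure_of (p1 ` I) \<subseteq> p1 ` I" by (intro conjI)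
    then show ?thesis by (simp only: closure_of_subset_eq)
  qed
  show ?thesis using closed conn haus by (simp add: ClH_def)
qed

lemma uniq:
  assumes C: "maximal_in (ClH X) C"
  shows "C = G2"
proof -
  have CC: "C \<in> ClH X" and mx: "\<And>D. D \<in> ClH X \<Longrightarrow> C \<subseteq> D \<Longrightarrow> D = C"
    using C unfolding maximal_in_def by auto
  have cl: "closedin X C" and co: "connectedin X C" using CC by (auto simp: ClH_def)
  have Csub: "C \<subseteq> topspace X" using cl closedin_subset by blast
  show ?thesis
  proof (cases "C \<inter> G1 = {}")
    case True
    then have "C \<subseteq> G2" using Csub un by blast
    then show ?thesis using mx[OF G2ClH] by blast
  next
    case False
    then have "C \<inter> G2 = {}" using notboth[OF CC] by blast
    then have CG1: "C \<subseteq> G1" using Csub un by blast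
    define B where "B = {a\<in>-{0}. p1 a \<in> C}"
    have BC: "p1 ` B = C" using img1 CG1 unfolding B_def by auto
    have B0: "B \<subseteq> -{0}" unfolding B_def by auto
    have Bne: "B \<noteq> {}" using BC False by auto
    obtain g where hm: "homeomorphic_maps (top_of_set (-{0::real})) (subtopology X G1) p1 g"
      using h1 homeomorphic_map_maps by blast
    have gc: "continuous_map (subtopology X G1) (top_of_set (-{0::real})) g"
      and gi: "\<And>y. y \<in> G1 \<Longrightarrow> p1 (g y) = y" and ig: "\<And>x. x \<in> -{0} \<Longrightarrow> g (p1 x) = x"
      using hm un unfolding homeomorphic_maps_def by auto
    have "g ` C = B"
    proof
      show "g ` C \<subseteq> B"
      proof
        fix a assume "a \<in> g ` C"
        then obtain c where c: "c \<in> C" "a = g c" by blast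
        have "c \<in> topspace (subtopology X G1)" using c CG1 un by auto
        moreover have "g ` topspace (subtopology X G1) \<subseteq> topspace (top_of_set (-{0::real}))"
          by (rule continuous_map_image_subset_topspace[OF gc])
        ultimately have "g c \<in> -{0}" by auto
        then show "a \<in> B" using c gi CG1 unfolding B_def by auto
      qed
      show "B \<subseteq> g ` C" using ig unfolding B_def by force
    qed
    moreover have "connectedin (subtopology X G1) C" using co CG1 by (simp add: connectedin_subtopology)
    ultimately have "connectedin (top_of_set (-{0::real})) B"
      using connectedin_continuous_map_image[OF gc] by metis
    then have Bconn: "connected B" by (simp add: connectedin_subtopology)
    have nl: "\<not> 0 islimpt B"
    proof
      assume "0 islimpt B"
      then have "G2 \<subseteq> X closure_of (p1 ` B)" using iii1[OF B0] iii2[OF B0] by blast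
      then have "G2 \<subseteq> C" using closure_of_eq[THEN iffD2, OF cl] BC by simp
      then show False using CG1 dj G2ne by blast
    qed
    have "\<exists>e>0. \<forall>b\<in>B. b \<noteq> 0 \<longrightarrow> \<not> dist b 0 < e" using nl[unfolded islimpt_approachable] by blast
    then obtain e where e0: "e > 0" and eB: "\<forall>b\<in>B. b \<noteq> 0 \<longrightarrow> \<not> dist b 0 < e" by blast
    have e: "e > 0" "\<And>b. b \<in> B \<Longrightarrow> \<bar>b\<bar> \<ge> e"
    proof -
      show "e > 0" by (rule e0)
      fix b assume b: "b \<in> B"
      then have "b \<noteq> 0" using B0 by blast
      then show "\<bar>b\<bar> \<ge> e" using eB b by (auto simp: dist_real_def)
    qed
    have side: "B \<subseteq> {0<..} \<or> B \<subseteq> {..<0}"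
    proof (rule ccontr)
      assume "\<not> (B \<subseteq> {0<..} \<or> B \<subseteq> {..<0})"
      then obtain a b where "a \<in> B" "b \<in> B" "a \<le> 0" "b \<ge> 0" by force
      then have "0 \<in> B" using Bconn[unfolded connected_iff_interval] by blast
      then show False using B0 by blast
    qed
    obtain I where I: "I \<subseteq> -{0}" "closed I" "connected I" "B \<subseteq> I" "\<not> I \<subseteq> B"
    proof (cases "B \<subseteq> {0<..}")
      case True
      show ?thesis
      proof (rule that[of "{e/2..}"])
        show "{e/2..} \<subseteq> -{0}" using e by auto
        show "B \<subseteq> {e/2..}" using True e by force
        show "\<not> {e/2..} \<subseteq> B" using e(1) e(2)[of "e/2"] by auto
      qed auto
    next
      case False
      then have F: "B \<subseteq> {..<0}" using side by blast
      show ?thesis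
      proof (rule that[of "{..-e/2}"])
        show "{..-e/2} \<subseteq> -{0}" using e by auto
        show "B \<subseteq> {..-e/2}" using F e by force
        show "\<not> {..-e/2} \<subseteq> B" using e(1) e(2)[of "-e/2"] by auto
      qed auto
    qed
    have "p1 ` I \<in> ClH X" by (rule ext[OF I(1-3)])
    moreover have "C \<subseteq> p1 ` I" using BC I(4) by blast
    ultimately have eq: "p1 ` I = C" using mx by blast
    obtain t where "t \<in> I" "t \<notin> B" using I(5) by blast
    then show ?thesis using eq I(1) unfolding B_def by blast
  qed
qed

end

theorem lemma2p3:
  fixes X :: "'a topology" and n :: nat
  assumes "n \<ge> 1"
  shows "(\<forall>G1 G2 H1 H2. special_partition X n G1 G2 \<and> special_partition X n H1 H2
            \<longrightarrow> G1 = H1 \<and> G2 = H2)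
       \<and> (\<forall>G1 G2. special_partition X n G1 G2 \<longrightarrow>
            maximal_in (ClH X) G2 \<and> (\<forall>C. maximal_in (ClH X) C \<longrightarrow> C = G2))"
proof -
  have P: "maximal_in (ClH X) G2 \<and> (\<forall>C. maximal_in (ClH X) C \<longrightarrow> C = G2)"
    if sp: "special_partition X n G1 G2" for G1 G2
  proof -
    note S = sp[unfolded special_partition_def]
    have a1: "G1 \<union> G2 = topspace X" using S by (elim conjE)
    have a2: "G1 \<inter> G2 = {}" using S by (elim conjE)
    have a3: "openin X G1" using S by (elim conjE)
    have e2: "\<exists>\<psi>2. homeomorphic_map (Euclidean_space (2 * n)) (subtopology X G2) \<psi>2"
      using S by (elim conjE)
    obtain p2 where a4: "homeomorphic_map (Euclidean_space (2 * n)) (subtopology X G2) p2"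
      using e2 by (elim exE)
    have e1: "\<exists>\<psi>1. homeomorphic_map (top_of_set (- {0::real})) (subtopology X G1) \<psi>1 \<and>
        (\<forall>A. A \<subseteq> - {0} \<longrightarrow>
           ((0 islimpt A) \<longleftrightarrow> G2 \<inter> X closure_of (\<psi>1 ` A) \<noteq> {}) \<and>
           (G2 \<inter> X closure_of (\<psi>1 ` A) \<noteq> {} \<longleftrightarrow> G2 \<subseteq> X closure_of (\<psi>1 ` A)))"
      using S by (elim conjE)
    obtain p1 where a5: "homeomorphic_map (top_of_set (- {0::real})) (subtopology X G1) p1 \<and>
        (\<forall>A. A \<subseteq> - {0} \<longrightarrow>
           ((0 islimpt A) \<longleftrightarrow> G2 \<inter> X closure_of (p1 ` A) \<noteq> {}) \<and>
           (G2 \<inter> X closure_of (p1 ` A) \<noteq> {} \<longleftrightarrow> G2 \<subseteq> X closure_of (p1 ` A)))"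
      using e1 by (elim exE)
    interpret sp X n G1 G2 p1 p2
    proof
      show "n \<ge> 1" by (rule assms)
      show "G1 \<union> G2 = topspace X" by (rule a1)
      show "G1 \<inter> G2 = {}" by (rule a2)
      show "openin X G1" by (rule a3)
      show "homeomorphic_map (Euclidean_space (2*n)) (subtopology X G2) p2" by (rule a4)
      show "homeomorphic_map (top_of_set (-{0::real})) (subtopology X G1) p1"
        using a5 by (rule conjunct1)
      fix A :: "real set" assume A: "A \<subseteq> -{0}"
      have c: "((0 islimpt A) \<longleftrightarrow> G2 \<inter> X closure_of (p1 ` A) \<noteq> {}) \<and>
           (G2 \<inter> X closure_of (p1 ` A) \<noteq> {} \<longleftrightarrow> G2 \<subseteq> X closure_of (p1 ` A))"
        using conjunct2[OF a5, rule_format, OF A] .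
      show "(0 islimpt A) \<longleftrightarrow> G2 \<inter> X closure_of (p1 ` A) \<noteq> {}" using c by (rule conjunct1)
      show "G2 \<inter> X closure_of (p1 ` A) \<noteq> {} \<longleftrightarrow> G2 \<subseteq> X closure_of (p1 ` A)" using c by (rule conjunct2)
    qed
    show ?thesis using G2max uniq by blast
  qed
  have "G1 = H1 \<and> G2 = H2"
    if s: "special_partition X n G1 G2" "special_partition X n H1 H2" for G1 G2 H1 H2
  proof -
    have "G2 = H2" using P[OF s(1)] P[OF s(2)] by blast
    moreover have "G1 \<union> G2 = topspace X \<and> G1 \<inter> G2 = {}"
      using s(1)[unfolded special_partition_def] by (elim conjE) (rule conjI)
    moreover have "H1 \<union> H2 = topspace X \<and> H1 \<inter> H2 = {}"
      using s(2)[unfolded special_partition_def] by (elim conjE) (rule conjI)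
    ultimately show ?thesis by blast
  qed
  then show ?thesis using P by blast
qed

end
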